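(* Let $\tau\subset\mathbb{Z}^4_{\ge0}$ be a B-facet containing a point $Q$ with exactly one nonzero coordinate such that $\tau\setminus\{Q\}$ has dimension $2$. Then $\tau$ is a $B_1$-facet, or a $B_2$-facet, or a flat border.
   Context: A $k$-simplex is a set of $k+1$ affinely independent points; a $k$-simplex $S\subset\mathbb{Z}^n_{\ge0}$ is a B-simplex if there is an index $i$ with exactly $k$ vertices in $\{x_i=0\}$ and the remaining vertex having $x_i=1$. Dimension of a finite set means dimension of its affine span. A B-facet in $\mathbb{Z}^n_{\ge0}$ is a finite set $\tau\subset\mathbb{Z}^n_{\ge0}$ whose affine span is a hyperplane $\{\langle a,x\rangle=b\}$ with all $a_j>0$, such that every $(n-1)$-simplex with vertices in $\tau$ is a B-simplex. For $\tau\subset\mathbb{Z}^4_{\ge0}$: $\tau$ is a $B_1$-facet if for some $i$ exactly one point has nonzero $x_i$, with $x_i=1$; a $B_2$-facet if for some distinct $i,j$ all $x\in\tau$ have $(x_i,x_j)\in\{(0,0),(1,0),(0,1)\}$; a flat border if there are distinct $i,j$ and $C\in\tau$ with $C_i=C_j=1$ such that $\tau$ contains at least two distinct points with $x_i=x_j=0$ and every point of $\tau$ other than $C$ lies in $\{x_i=0\}\cup\{x_j=0\}$. *)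

theory Defs
  imports "HOL-Analysis.Analysis"
begin

text \<open>Points of Z^n_{>=0} are represented as real vectors with nonnegative integer coordinates.\<close>

definition lattice_pt :: "real ^ 'n \<Rightarrow> bool" where
  "lattice_pt x \<longleftrightarrow> (\<forall>i. x $ i \<in> \<int> \<and> x $ i \<ge> 0)"

definition is_simplex :: "nat \<Rightarrow> (real ^ 'n) set \<Rightarrow> bool" where
  "is_simplex k S \<longleftrightarrow> finite S \<and> card S = k + 1 \<and> \<not> affine_dependent S"

definition B_simplex :: "nat \<Rightarrow> (real ^ 'n) set \<Rightarrow> bool" where
  "B_simplex k S \<longleftrightarrow> is_simplex k S \<and> (\<forall>x\<in>S. lattice_pt x) \<and>
     (\<exists>i. card {x\<in>S. x $ i = 0} = k \<and> (\<forall>x\<in>S. x $ i \<noteq> 0 \<longrightarrow> x $ i = 1))"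

definition B_facet :: "(real ^ 'n) set \<Rightarrow> bool" where
  "B_facet \<tau> \<longleftrightarrow> finite \<tau> \<and> (\<forall>x\<in>\<tau>. lattice_pt x) \<and>
     (\<exists>a b. (\<forall>j. a $ j > 0) \<and> affine hull \<tau> = {x. a \<bullet> x = b}) \<and>
     (\<forall>S\<subseteq>\<tau>. is_simplex (CARD('n) - 1) S \<longrightarrow> B_simplex (CARD('n) - 1) S)"

definition B1_facet :: "(real ^ 'n) set \<Rightarrow> bool" where
  "B1_facet \<tau> \<longleftrightarrow> (\<exists>i. \<exists>p\<in>\<tau>. p $ i = 1 \<and> (\<forall>x\<in>\<tau>. x \<noteq> p \<longrightarrow> x $ i = 0))"

definition B2_facet :: "(real ^ 'n) set \<Rightarrow> bool" where
  "B2_facet \<tau> \<longleftrightarrow> (\<exists>i j. i \<noteq> j \<and>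
     (\<forall>x\<in>\<tau>. (x $ i, x $ j) \<in> {(0,0), (1,0), (0,1)}))"

definition flat_border :: "(real ^ 'n) set \<Rightarrow> bool" where
  "flat_border \<tau> \<longleftrightarrow> (\<exists>i j C. i \<noteq> j \<and> C \<in> \<tau> \<and> C $ i = 1 \<and> C $ j = 1 \<and>
     (\<exists>p\<in>\<tau>. \<exists>q\<in>\<tau>. p \<noteq> q \<and> p $ i = 0 \<and> p $ j = 0 \<and> q $ i = 0 \<and> q $ j = 0) \<and>
     (\<forall>x\<in>\<tau> - {C}. x $ i = 0 \<or> x $ j = 0))"

end

theory Submission
  imports Defs
begin

definition sep :: "4 set \<Rightarrow> real^4 \<Rightarrow> real^4 \<Rightarrow> real^4 \<Rightarrow> bool" where
  "sep K u v w \<longleftrightarrow> (\<exists>m\<in>K. (u$m=0 \<and> v$m=0 \<and> w$m=1) \<or> (u$m=0 \<and> v$m=1 \<and> w$m=0) \<or> (u$m=1 \<and> v$m=0 \<and> w$m=0))"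

definition concl :: "(real^4) set \<Rightarrow> bool" where
  "concl X \<longleftrightarrow> B1_facet X \<or> B2_facet X \<or> flat_border X"

locale combi =
  fixes R :: "(real^4) set" and Q :: "real^4" and j k l :: 4
  assumes djk: "j \<noteq> k" "j \<noteq> l" "k \<noteq> l"
  and QnR: "Q \<notin> R"
  and Qz: "Q$j = 0" "Q$k = 0" "Q$l = 0"
  and inj3: "\<And>x y. \<lbrakk>x\<in>R; y\<in>R; x$j=y$j; x$k=y$k; x$l=y$l\<rbrakk> \<Longrightarrow> x=y"
  and F2: "\<And>x y m m'. \<lbrakk>x\<in>R; y\<in>R; m\<in>{j,k,l}; m'\<in>{j,k,l}; m\<noteq>m'; x$m=0; x$m'=0; y$m=0; y$m'=0\<rbrakk> \<Longrightarrow> x=y"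
  and nz: "\<And>x. x\<in>R \<Longrightarrow> x$j\<noteq>0 \<or> x$k\<noteq>0 \<or> x$l\<noteq>0"
  and Hsep: "\<And>u v w m. \<lbrakk>u\<in>R; v\<in>R; w\<in>R; u\<noteq>v; u\<noteq>w; v\<noteq>w; m\<in>{j,k,l}; u$m=v$m; w$m\<noteq>u$m\<rbrakk> \<Longrightarrow> sep {j,k,l} u v w"
begin

definition goodc :: "4 \<Rightarrow> bool" where
  "goodc m \<longleftrightarrow> (\<exists>z1\<in>R. \<exists>z2\<in>R. z1\<noteq>z2 \<and> z1$m=0 \<and> z2$m=0) \<and> (\<exists>p\<in>R. p$m=1) \<and> (\<forall>x\<in>R. x$m=0 \<or> x$m=1)"

lemma Qzm: "m \<in> {j,k,l} \<Longrightarrow> Q$m = 0"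
  using Qz by auto

lemma inj3p:
  assumes "{m1,m2,m3} = {j,k,l}" "x\<in>R" "y\<in>R" "x$m1=y$m1" "x$m2=y$m2" "x$m3=y$m3"
  shows "x = y"
proof -
  have "\<forall>c\<in>{m1,m2,m3}. x$c = y$c" using assms by auto
  then have "\<forall>c\<in>{j,k,l}. x$c = y$c" using assms(1) by simp
  then show ?thesis using inj3 assms by auto
qed

lemma nzp:
  assumes "{m1,m2,m3} = {j,k,l}" "x\<in>R"
  shows "x$m1\<noteq>0 \<or> x$m2\<noteq>0 \<or> x$m3\<noteq>0"
proof (rule ccontr)
  assume "\<not> ?thesis"
  then have "\<forall>c\<in>{m1,m2,m3}. x$c = 0" by auto
  then have "\<forall>c\<in>{j,k,l}. x$c = 0" using assms(1) by simp
  then show False using nz assms by auto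
qed

lemma F2p:
  assumes "{m1,m2,m3} = {j,k,l}" "x\<in>R" "y\<in>R" "m\<in>{m1,m2,m3}" "m'\<in>{m1,m2,m3}" "m\<noteq>m'"
    "x$m=0" "x$m'=0" "y$m=0" "y$m'=0"
  shows "x = y"
  using F2[of x y m m'] assms by simp

lemma Hsepp:
  assumes "{m1,m2,m3} = {j,k,l}" "u\<in>R" "v\<in>R" "w\<in>R" "u\<noteq>v" "u\<noteq>w" "v\<noteq>w"
    "m\<in>{m1,m2,m3}" "u$m=v$m" "w$m\<noteq>u$m"
  shows "(u$m1=0 \<and> v$m1=0 \<and> w$m1=1) \<or> (u$m1=0 \<and> v$m1=1 \<and> w$m1=0) \<or> (u$m1=1 \<and> v$m1=0 \<and> w$m1=0) \<or>
         (u$m2=0 \<and> v$m2=0 \<and> w$m2=1) \<or> (u$m2=0 \<and> v$m2=1 \<and> w$m2=0) \<or> (u$m2=1 \<and> v$m2=0 \<and> w$m2=0) \<or>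
         (u$m3=0 \<and> v$m3=0 \<and> w$m3=1) \<or> (u$m3=0 \<and> v$m3=1 \<and> w$m3=0) \<or> (u$m3=1 \<and> v$m3=0 \<and> w$m3=0)"
proof -
  have "sep {j,k,l} u v w" using Hsep[of u v w m] assms by simp
  then have "sep {m1,m2,m3} u v w" using assms(1) by simp
  then show ?thesis unfolding sep_def by auto
qed

lemma core2:
  assumes K: "{m1,m2,m3} = {j,k,l}" "m1\<noteq>m2" "m1\<noteq>m3" "m2\<noteq>m3"
    and u: "u\<in>R" "u$m1=0" "u$m2=0" and v: "v\<in>R" "v$m2=1"
    and g: "g\<in>R" "g$m1\<noteq>0" "g$m1\<noteq>1" "g$m2=0"
    and nA2: "\<not> goodc m2" and nA3: "\<not> goodc m3"
  shows False
proof -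
  have ug: "u \<noteq> g" using u g by auto
  obtain h where h: "h\<in>R" "h$m2\<noteq>0" "h$m2\<noteq>1"
    using nA2 ug u g v unfolding goodc_def by blast
  have "u \<noteq> h" "g \<noteq> h" using u g h by auto
  from Hsepp[OF K(1) u(1) g(1) h(1) ug this, of m2] u g h
  have "u$m3=1 \<and> g$m3=0 \<and> h$m3=0"
    using nzp[OF K(1) u(1)] by auto
  then have u3: "u$m3=1" and g3: "g$m3=0" and h3: "h$m3=0" by auto
  have gh: "g \<noteq> h" using g h by auto
  obtain k' where k': "k'\<in>R" "k'$m3\<noteq>0" "k'$m3\<noteq>1"
    using nA3 gh g3 h3 g h u u3 unfolding goodc_def by blast
  have "g \<noteq> k'" "h \<noteq> k'" using g3 h3 k' by auto
  from Hsepp[OF K(1) g(1) h(1) k'(1) gh this, of m3] g3 h3 k' g h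
  show False by auto
qed

lemma core1:
  assumes K: "{m1,m2,m3} = {j,k,l}" "m1\<noteq>m2" "m1\<noteq>m3" "m2\<noteq>m3"
    and uv: "u\<in>R" "v\<in>R" "u\<noteq>v" "u$m1=0" "v$m1=0" and w: "w\<in>R" "w$m1=1"
    and nA: "\<not> goodc m1" "\<not> goodc m2" "\<not> goodc m3"
  shows False
proof -
  obtain g where g: "g\<in>R" "g$m1\<noteq>0" "g$m1\<noteq>1"
    using nA(1) uv w unfolding goodc_def by blast
  have K': "{m1,m3,m2} = {j,k,l}" using K by auto
  have "u \<noteq> g" "v \<noteq> g" using uv g by auto
  from Hsepp[OF K(1) uv(1) uv(2) g(1) uv(3) this, of m1] uv g
  have "(u$m2=0 \<and> v$m2=0 \<and> g$m2=1) \<or> (u$m2=0 \<and> v$m2=1 \<and> g$m2=0) \<or> (u$m2=1 \<and> v$m2=0 \<and> g$m2=0) \<or>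
         (u$m3=0 \<and> v$m3=0 \<and> g$m3=1) \<or> (u$m3=0 \<and> v$m3=1 \<and> g$m3=0) \<or> (u$m3=1 \<and> v$m3=0 \<and> g$m3=0)"
    by auto
  then show False
  proof (elim disjE)
    assume "u$m2=0 \<and> v$m2=0 \<and> g$m2=1"
    then show False using F2p[OF K(1) uv(1) uv(2), of m1 m2] uv K by auto
  next
    assume "u$m2=0 \<and> v$m2=1 \<and> g$m2=0"
    then show False using core2[OF K, of u v g] uv g nA by auto
  next
    assume "u$m2=1 \<and> v$m2=0 \<and> g$m2=0"
    then show False using core2[OF K, of v u g] uv g nA by auto
  next
    assume "u$m3=0 \<and> v$m3=0 \<and> g$m3=1"
    then show False using F2p[OF K(1) uv(1) uv(2), of m1 m3] uv K by auto
  next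
    assume "u$m3=0 \<and> v$m3=1 \<and> g$m3=0"
    then show False using core2[OF K' K(3) K(2) K(4)[symmetric], of u v g] uv g nA by auto
  next
    assume "u$m3=1 \<and> v$m3=0 \<and> g$m3=0"
    then show False using core2[OF K' K(3) K(2) K(4)[symmetric], of v u g] uv g nA by auto
  qed
qed

lemma core1':
  assumes "m1\<in>{j,k,l}" "u\<in>R" "v\<in>R" "u\<noteq>v" "u$m1=0" "v$m1=0" "w\<in>R" "w$m1=1"
  shows "\<exists>m\<in>{j,k,l}. goodc m"
proof (rule ccontr)
  assume nA: "\<not> ?thesis"
  from assms(1) consider "m1 = j" | "m1 = k" | "m1 = l" by auto
  then show False
  proof cases
    case 1
    then show False using core1[of j k l u v w] assms nA djk by auto
  next
    case 2
    then show False using core1[of k j l u v w] assms nA djk by auto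
  next
    case 3
    then show False using core1[of l j k u v w] assms nA djk by auto
  qed
qed

lemma part1:
  assumes "u\<in>R" "v\<in>R" "w\<in>R" "u\<noteq>v" "u\<noteq>w" "v\<noteq>w" "sep {j,k,l} u v w"
  shows "\<exists>m\<in>{j,k,l}. goodc m"
proof -
  obtain m where m: "m\<in>{j,k,l}" and
    "(u$m=0 \<and> v$m=0 \<and> w$m=1) \<or> (u$m=0 \<and> v$m=1 \<and> w$m=0) \<or> (u$m=1 \<and> v$m=0 \<and> w$m=0)"
    using assms(7) unfolding sep_def by blast
  then show ?thesis
    using core1'[of m u v w] core1'[of m u w v] core1'[of m v w u] assms by auto
qed


lemma B1I:
  assumes "m\<in>{j,k,l}" "p\<in>R" "p$m=1" "\<forall>x\<in>R. x\<noteq>p \<longrightarrow> x$m=0"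
  shows "concl (insert Q R)"
proof -
  have "B1_facet (insert Q R)"
    unfolding B1_facet_def
    using assms Qzm[OF assms(1)] by (intro exI[of _ m] bexI[of _ p]) auto
  then show ?thesis unfolding concl_def by simp
qed

lemma B2I:
  assumes "m\<in>{j,k,l}" "r\<in>{j,k,l}" "m\<noteq>r"
    "\<forall>x\<in>R. (x$m=0 \<and> x$r=0) \<or> (x$m=1 \<and> x$r=0) \<or> (x$m=0 \<and> x$r=1)"
  shows "concl (insert Q R)"
proof -
  have "B2_facet (insert Q R)"
    unfolding B2_facet_def
    using assms Qzm[OF assms(1)] Qzm[OF assms(2)] by (intro exI[of _ m] exI[of _ r]) auto
  then show ?thesis unfolding concl_def by simp
qed

lemma FI:
  assumes "m\<in>{j,k,l}" "r\<in>{j,k,l}" "m\<noteq>r" "C\<in>R" "C$m=1" "C$r=1" "z\<in>R" "z$m=0" "z$r=0"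
    "\<forall>x\<in>R. x\<noteq>C \<longrightarrow> x$m=0 \<or> x$r=0"
  shows "concl (insert Q R)"
proof -
  have zQ: "z \<noteq> Q" using assms QnR by auto
  have "flat_border (insert Q R)"
    unfolding flat_border_def
    apply (rule exI[of _ m], rule exI[of _ r], rule exI[of _ C])
    using assms Qzm[OF assms(1)] Qzm[OF assms(2)] zQ by auto
  then show ?thesis unfolding concl_def by simp
qed

lemma p2_nc_r:
  assumes K: "{m,r,r'} = {j,k,l}" "m\<noteq>r" "m\<noteq>r'" "r\<noteq>r'"
    and all01: "\<forall>x\<in>R. x$m=0 \<or> x$m=1"
    and Or: "\<forall>p\<in>R. p$m=1 \<longrightarrow> p$r=0"
    and p: "p0\<in>R" "p1\<in>R" "p0\<noteq>p1" "p0$m=1" "p1$m=1"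
  shows "concl (insert Q R)"
proof (cases "\<forall>z\<in>R. z$m=0 \<longrightarrow> z$r=0 \<or> z$r=1")
  case True
  have "m\<in>{j,k,l}" "r\<in>{j,k,l}" using K(1) by auto
  then show ?thesis
    using B2I[of m r] K True all01 Or by fastforce
next
  case False
  then obtain z where z: "z\<in>R" "z$m=0" "z$r\<noteq>0" "z$r\<noteq>1" by auto
  have key: "z$r'=0 \<and> ((pa$r'=0 \<and> pb$r'=1) \<or> (pa$r'=1 \<and> pb$r'=0))"
    if "pa\<in>R" "pb\<in>R" "pa\<noteq>pb" "pa$m=1" "pb$m=1" for pa pb
  proof -
    have "pa \<noteq> z" "pb \<noteq> z" using that z by auto
    from Hsepp[OF K(1) that(1) that(2) z(1) that(3) this, of m] that z
    have d: "(pa$r=0 \<and> pb$r=0 \<and> z$r=1) \<or> (pa$r=0 \<and> pb$r=1 \<and> z$r=0) \<or> (pa$r=1 \<and> pb$r=0 \<and> z$r=0) \<or>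
         (pa$r'=0 \<and> pb$r'=0 \<and> z$r'=1) \<or> (pa$r'=0 \<and> pb$r'=1 \<and> z$r'=0) \<or> (pa$r'=1 \<and> pb$r'=0 \<and> z$r'=0)"
      by auto
    have "\<not> (pa$r'=0 \<and> pb$r'=0)"
      using inj3p[OF K(1) that(1) that(2)] that Or by auto
    then show ?thesis using d z by auto
  qed
  have O2: "x = p0 \<or> x = p1" if "x\<in>R" "x$m=1" for x
  proof (rule ccontr)
    assume "\<not> ?thesis"
    then show False using key[of p0 x] key[of p1 x] key[of p0 p1] p that by auto
  qed
  have mK: "m\<in>{j,k,l}" "r'\<in>{j,k,l}" using K(1) by auto
  from key[OF p] have "z$r'=0" and c: "(p0$r'=0 \<and> p1$r'=1) \<or> (p0$r'=1 \<and> p1$r'=0)" by auto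
  from c show ?thesis
  proof
    assume c1: "p0$r'=0 \<and> p1$r'=1"
    show ?thesis
      apply (rule FI[OF mK K(3) p(2) p(5) _ z(1) z(2) \<open>z$r'=0\<close>])
      using c1 O2 all01 by auto
  next
    assume c1: "p0$r'=1 \<and> p1$r'=0"
    show ?thesis
      apply (rule FI[OF mK K(3) p(1) p(4) _ z(1) z(2) \<open>z$r'=0\<close>])
      using c1 O2 all01 by auto
  qed
qed

lemma p2_nc:
  assumes K: "{m,s,t} = {j,k,l}" "m\<noteq>s" "m\<noteq>t" "s\<noteq>t"
    and all01: "\<forall>x\<in>R. x$m=0 \<or> x$m=1"
    and p: "p0\<in>R" "p1\<in>R" "p0\<noteq>p1" "p0$m=1" "p1$m=1"
    and z: "z\<in>R" "z$m=0" "z$s\<noteq>0" "z$t\<noteq>0"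
  shows "concl (insert Q R)"
proof -
  have pair: "(pa$s=0 \<and> pb$s=0) \<or> (pa$t=0 \<and> pb$t=0)"
    if "pa\<in>R" "pb\<in>R" "pa\<noteq>pb" "pa$m=1" "pb$m=1" for pa pb
  proof -
    have "pa \<noteq> z" "pb \<noteq> z" using that z by auto
    from Hsepp[OF K(1) that(1) that(2) z(1) that(3) this, of m] that z
    show ?thesis by auto
  qed
  have ex: "\<exists>r\<in>{s,t}. \<forall>p\<in>R. p$m=1 \<longrightarrow> p$r=0"
  proof (rule ccontr)
    assume "\<not> ?thesis"
    then obtain a b where a: "a\<in>R" "a$m=1" "a$s\<noteq>0" and b: "b\<in>R" "b$m=1" "b$t\<noteq>0" by auto
    show False
    proof (cases "a = b")
      case True
      then show False using pair[of a p0] pair[of a p1] a b p by auto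
    next
      case False
      then show False using pair[of a b] a b by auto
    qed
  qed
  then show ?thesis
  proof
    fix r assume "r\<in>{s,t}" and Or: "\<forall>p\<in>R. p$m=1 \<longrightarrow> p$r=0"
    then consider "r = s" | "r = t" by auto
    then show ?thesis
    proof cases
      case 1
      then show ?thesis using p2_nc_r[OF K all01 _ p] Or by simp
    next
      case 2
      have K': "{m,t,s} = {j,k,l}" using K(1) by auto
      show ?thesis using p2_nc_r[OF K' K(3) K(2) K(4)[symmetric] all01 _ p] Or 2 by simp
    qed
  qed
qed

lemma p2_c':
  assumes K: "{m,s,t} = {j,k,l}" "m\<noteq>s" "m\<noteq>t" "s\<noteq>t"
    and all01: "\<forall>x\<in>R. x$m=0 \<or> x$m=1"
    and p: "p0\<in>R" "p1\<in>R" "p0\<noteq>p1" "p0$m=1" "p1$m=1"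
    and z1: "z1\<in>R" "z1$m=0" "z1$s=0" and z2: "z2\<in>R" "z2$m=0" "z2$t=0"
    and Zc: "\<forall>z\<in>R. z$m=0 \<longrightarrow> z$s=0 \<or> z$t=0"
  shows "concl (insert Q R)"
proof -
  have z1t: "z1$t \<noteq> 0" using nzp[OF K(1) z1(1)] z1 by auto
  have z2s: "z2$s \<noteq> 0" using nzp[OF K(1) z2(1)] z2 by auto
  have pair: "((pa$s=0 \<and> pb$s=1) \<or> (pa$s=1 \<and> pb$s=0)) \<and> ((pa$t=0 \<and> pb$t=1) \<or> (pa$t=1 \<and> pb$t=0))"
    if "pa\<in>R" "pb\<in>R" "pa\<noteq>pb" "pa$m=1" "pb$m=1" for pa pb
  proof -
    have "pa \<noteq> z1" "pb \<noteq> z1" "pa \<noteq> z2" "pb \<noteq> z2" using that z1 z2 by auto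
    from Hsepp[OF K(1) that(1) that(2) z1(1) that(3) \<open>pa \<noteq> z1\<close> \<open>pb \<noteq> z1\<close>, of m] that z1 z1t
    have d1: "(pa$s=0 \<and> pb$s=1) \<or> (pa$s=1 \<and> pb$s=0) \<or> (pa$t=0 \<and> pb$t=0)" by auto
    from Hsepp[OF K(1) that(1) that(2) z2(1) that(3) \<open>pa \<noteq> z2\<close> \<open>pb \<noteq> z2\<close>, of m] that z2 z2s
    have d2: "(pa$t=0 \<and> pb$t=1) \<or> (pa$t=1 \<and> pb$t=0) \<or> (pa$s=0 \<and> pb$s=0)" by auto
    have "\<not> (pa$s=0 \<and> pb$s=0 \<and> pa$t=0 \<and> pb$t=0)"
      using inj3p[OF K(1) that(1) that(2)] that by auto
    then show ?thesis using d1 d2 by auto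
  qed
  have O2: "x = p0 \<or> x = p1" if "x\<in>R" "x$m=1" for x
  proof (rule ccontr)
    assume "\<not> ?thesis"
    then show False using pair[of p0 x] pair[of p1 x] pair[of p0 p1] p that by auto
  qed
  have mK: "m\<in>{j,k,l}" "s\<in>{j,k,l}" "t\<in>{j,k,l}" using K(1) by auto
  from pair[OF p] have
    c: "((p0$s=0 \<and> p1$s=1) \<or> (p0$s=1 \<and> p1$s=0)) \<and> ((p0$t=0 \<and> p1$t=1) \<or> (p0$t=1 \<and> p1$t=0))" .
  then consider "p0$s=0 \<and> p1$s=1 \<and> p0$t=0 \<and> p1$t=1" | "p0$s=1 \<and> p1$s=0 \<and> p0$t=1 \<and> p1$t=0"
    | "p0$s=0 \<and> p1$s=1 \<and> p0$t=1 \<and> p1$t=0" | "p0$s=1 \<and> p1$s=0 \<and> p0$t=0 \<and> p1$t=1" by blast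
  then show ?thesis
  proof cases
    case 1
    show ?thesis
      apply (rule FI[OF mK(2) mK(3) K(4) p(2) _ _ p(1)])
      using 1 O2 all01 Zc by auto
  next
    case 2
    show ?thesis
      apply (rule FI[OF mK(2) mK(3) K(4) p(1) _ _ p(2)])
      using 2 O2 all01 Zc by auto
  next
    case 3
    show ?thesis
      apply (rule FI[OF mK(1) mK(2) K(2) p(2) p(5) _ z1(1) z1(2) z1(3)])
      using 3 O2 all01 by auto
  next
    case 4
    show ?thesis
      apply (rule FI[OF mK(1) mK(2) K(2) p(1) p(4) _ z1(1) z1(2) z1(3)])
      using 4 O2 all01 by auto
  qed
qed

lemma p2_c:
  assumes K: "{m,s,t} = {j,k,l}" "m\<noteq>s" "m\<noteq>t" "s\<noteq>t"
    and all01: "\<forall>x\<in>R. x$m=0 \<or> x$m=1"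
    and p: "p0\<in>R" "p1\<in>R" "p0\<noteq>p1" "p0$m=1" "p1$m=1"
    and z: "z1\<in>R" "z2\<in>R" "z1\<noteq>z2" "z1$m=0" "z2$m=0"
    and Zc: "\<forall>z\<in>R. z$m=0 \<longrightarrow> z$s=0 \<or> z$t=0"
  shows "concl (insert Q R)"
proof -
  have c1: "z1$s=0 \<or> z1$t=0" "z2$s=0 \<or> z2$t=0" using Zc z by auto
  have n1: "\<not> (z1$s=0 \<and> z2$s=0)" using F2p[OF K(1) z(1) z(2), of m s] z K by auto
  have n2: "\<not> (z1$t=0 \<and> z2$t=0)" using F2p[OF K(1) z(1) z(2), of m t] z K by auto
  from c1 n1 n2 consider "z1$s=0 \<and> z2$t=0" | "z1$t=0 \<and> z2$s=0" by auto
  then show ?thesis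
  proof cases
    case 1
    then show ?thesis using p2_c'[OF K all01 p, of z1 z2] z Zc by auto
  next
    case 2
    then show ?thesis using p2_c'[OF K all01 p, of z2 z1] z Zc by auto
  qed
qed

lemma part2':
  assumes K: "{m,s,t} = {j,k,l}" "m\<noteq>s" "m\<noteq>t" "s\<noteq>t" and g: "goodc m"
  shows "concl (insert Q R)"
proof -
  obtain z1 z2 p0 where z: "z1\<in>R" "z2\<in>R" "z1\<noteq>z2" "z1$m=0" "z2$m=0" and p0: "p0\<in>R" "p0$m=1"
    and all01: "\<forall>x\<in>R. x$m=0 \<or> x$m=1"
    using g unfolding goodc_def by blast
  have mK: "m\<in>{j,k,l}" using K(1) by auto
  show ?thesis
  proof (cases "\<forall>x\<in>R. x$m=1 \<longrightarrow> x=p0")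
    case True
    show ?thesis using B1I[OF mK p0] True all01 by auto
  next
    case False
    then obtain p1 where p1: "p1\<in>R" "p1$m=1" "p1\<noteq>p0" by auto
    have p: "p0\<in>R" "p1\<in>R" "p0\<noteq>p1" "p0$m=1" "p1$m=1" using p0 p1 by auto
    show ?thesis
    proof (cases "\<exists>z\<in>R. z$m=0 \<and> z$s\<noteq>0 \<and> z$t\<noteq>0")
      case True
      then show ?thesis using p2_nc[OF K all01 p] by auto
    next
      case False
      then show ?thesis using p2_c[OF K all01 p z] by auto
    qed
  qed
qed

lemma part2:
  assumes "m\<in>{j,k,l}" "goodc m"
  shows "concl (insert Q R)"
proof -
  from assms(1) consider "m = j" | "m = k" | "m = l" by auto
  then show ?thesis
  proof cases
    case 1 then show ?thesis using part2'[of m k l] assms djk by auto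
  next
    case 2 then show ?thesis using part2'[of m j l] assms djk by auto
  next
    case 3 then show ?thesis using part2'[of m j k] assms djk by auto
  qed
qed

lemma combi_main:
  assumes "u\<in>R" "v\<in>R" "w\<in>R" "u\<noteq>v" "u\<noteq>w" "v\<noteq>w" "sep {j,k,l} u v w"
  shows "concl (insert Q R)"
  using part1[OF assms] part2 by blast

end


lemma four_split:
  fixes i :: 4
  shows "\<exists>j k l. j\<noteq>k \<and> j\<noteq>l \<and> k\<noteq>l \<and> i\<noteq>j \<and> i\<noteq>k \<and> i\<noteq>l \<and> (\<forall>c::4. c=i \<or> c=j \<or> c=k \<or> c=l)"
proof -
  have d: "(1::4) \<noteq> 2" "(1::4) \<noteq> 3" "(1::4) \<noteq> 4" "(2::4) \<noteq> 3" "(2::4) \<noteq> 4" "(3::4) \<noteq> 4" by simp_all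
  from exhaust_4[of i] show ?thesis
  proof (elim disjE)
    assume "i = 1" then show ?thesis using d exhaust_4 by (intro exI[of _ 2] exI[of _ 3] exI[of _ 4]) auto
  next
    assume "i = 2" then show ?thesis using d exhaust_4 by (intro exI[of _ 1] exI[of _ 3] exI[of _ 4]) auto
  next
    assume "i = 3" then show ?thesis using d exhaust_4 by (intro exI[of _ 1] exI[of _ 2] exI[of _ 4]) auto
  next
    assume "i = 4" then show ?thesis using d exhaust_4 by (intro exI[of _ 1] exI[of _ 2] exI[of _ 3]) auto
  qed
qed

lemma expand4:
  fixes a x :: "real^4"
  assumes "j\<noteq>k" "j\<noteq>l" "k\<noteq>l" "i\<noteq>j" "i\<noteq>k" "i\<noteq>l" "\<forall>c::4. c=i \<or> c=j \<or> c=k \<or> c=l"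
  shows "a \<bullet> x = a$i*x$i + a$j*x$j + a$k*x$k + a$l*x$l"
proof -
  have U: "(UNIV :: 4 set) = {i,j,k,l}" using assms(7) by auto
  have "a \<bullet> x = (\<Sum>c\<in>{i,j,k,l}. a$c * x$c)"
    unfolding inner_vec_def U by simp
  also have "\<dots> = a$i*x$i + a$j*x$j + a$k*x$k + a$l*x$l"
    using assms by (simp add: add.assoc)
  finally show ?thesis .
qed

lemma card_filter4a:
  assumes "a\<noteq>b" "a\<noteq>c" "a\<noteq>d" "b\<noteq>c" "b\<noteq>d" "c\<noteq>d" "P a" "card {x\<in>{a,b,c,d}. P x} = 3"
  shows "(P b \<and> P c \<and> \<not>P d) \<or> (P b \<and> \<not>P c \<and> P d) \<or> (\<not>P b \<and> P c \<and> P d)"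
proof -
  have e: "{x\<in>{a,b,c,d}. P x} = {x. x = a \<and> P a} \<union> {x. x = b \<and> P b} \<union> {x. x = c \<and> P c} \<union> {x. x = d \<and> P d}"
    by auto
  show ?thesis using assms(8) assms(1-7) unfolding e
    by (cases "P b"; cases "P c"; cases "P d") (auto simp: card_insert_if)
qed

lemma card_filter4b:
  assumes "a\<noteq>b" "a\<noteq>c" "a\<noteq>d" "b\<noteq>c" "b\<noteq>d" "c\<noteq>d" "\<not> P a" "card {x\<in>{a,b,c,d}. P x} = 3"
  shows "P b \<and> P c \<and> P d"
proof -
  have e: "{x\<in>{a,b,c,d}. P x} = {x. x = a \<and> P a} \<union> {x. x = b \<and> P b} \<union> {x. x = c \<and> P c} \<union> {x. x = d \<and> P d}"
    by auto
  show ?thesis using assms(8) assms(1-7) unfolding e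
    by (cases "P b"; cases "P c"; cases "P d") (auto simp: card_insert_if)
qed

locale geo =
  fixes T :: "(real^4) set" and Q a :: "real^4" and b :: real and i j k l :: 4
  assumes fin: "finite T" and QT: "Q \<in> T"
    and Qi: "Q$i \<noteq> 0" and Qo: "\<forall>c. c \<noteq> i \<longrightarrow> Q$c = 0"
    and apos: "\<forall>c. a$c > 0" and hullT: "affine hull T = {x. a \<bullet> x = b}"
    and simpl: "\<forall>S\<subseteq>T. is_simplex 3 S \<longrightarrow> B_simplex 3 S"
    and affR: "aff_dim (T - {Q}) = 2"
    and dist: "j\<noteq>k" "j\<noteq>l" "k\<noteq>l" "i\<noteq>j" "i\<noteq>k" "i\<noteq>l"
    and exh: "\<forall>c::4. c=i \<or> c=j \<or> c=k \<or> c=l"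
begin

abbreviation "R \<equiv> T - {Q}"

lemma TR: "T = insert Q R" using QT by auto

lemma hyp: "x \<in> T \<Longrightarrow> a \<bullet> x = b"
  using hull_inc[of x T] hullT by auto

lemma exp: "a \<bullet> x = a$i*x$i + a$j*x$j + a$k*x$k + a$l*x$l"
  by (rule expand4) (use dist exh in auto)

lemma Qjkl: "Q$j = 0" "Q$k = 0" "Q$l = 0" using Qo dist by auto

lemma affT: "aff_dim T = 3"
proof -
  have "a$i > 0" using apos by blast
  then have "a \<noteq> 0" by auto
  then have "aff_dim {x. a \<bullet> x = b} = 3" by simp
  then have "aff_dim (affine hull T) = 3" using hullT by simp
  then show ?thesis by simp
qed

lemma QnotR: "Q \<notin> affine hull R"
proof
  assume "Q \<in> affine hull R"
  then have "aff_dim T = aff_dim R" using aff_dim_insert[of Q R] TR by simp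
  then show False using affT affR by simp
qed

lemma vec_eq4: "(\<And>c. c=i \<or> c=j \<or> c=k \<or> c=l \<Longrightarrow> x$c = y$c) \<Longrightarrow> x = y"
  using exh by (simp add: vec_eq_iff)

lemma ai_cancel: "a$i * u = a$i * v \<Longrightarrow> u = v"
proof -
  assume "a$i * u = a$i * v"
  moreover have "a$i \<noteq> 0" using apos by (metis less_irrefl)
  ultimately show "u = v" by simp
qed

lemma inj3: "\<lbrakk>x\<in>R; y\<in>R; x$j=y$j; x$k=y$k; x$l=y$l\<rbrakk> \<Longrightarrow> x=y"
proof -
  assume as: "x\<in>R" "y\<in>R" "x$j=y$j" "x$k=y$k" "x$l=y$l"
  have "a \<bullet> x = a \<bullet> y" using hyp as by auto
  then have "a$i*x$i = a$i*y$i" using exp[of x] exp[of y] as by simp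
  then have "x$i = y$i" by (rule ai_cancel)
  then show "x = y" using as by (intro vec_eq4) auto
qed

lemma nz: "x\<in>R \<Longrightarrow> x$j\<noteq>0 \<or> x$k\<noteq>0 \<or> x$l\<noteq>0"
proof (rule ccontr)
  assume as: "x\<in>R" "\<not> (x$j\<noteq>0 \<or> x$k\<noteq>0 \<or> x$l\<noteq>0)"
  have "a \<bullet> x = a \<bullet> Q" using hyp as QT by auto
  then have "a$i*x$i = a$i*Q$i" using exp[of x] exp[of Q] as Qjkl by simp
  then have "x$i = Q$i" by (rule ai_cancel)
  then have "x = Q" using as Qjkl by (intro vec_eq4) auto
  then show False using as by simp
qed

lemma F2geo:
  assumes d: "m\<noteq>m'" "m\<noteq>r" "m'\<noteq>r" "i\<noteq>m" "i\<noteq>m'" "i\<noteq>r" and ex: "\<forall>c::4. c=i \<or> c=m \<or> c=m' \<or> c=r"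
    and xy: "x\<in>R" "y\<in>R" "x$m=0" "x$m'=0" "y$m=0" "y$m'=0"
  shows "x = y"
proof (rule ccontr)
  assume nxy: "x \<noteq> y"
  have e: "a \<bullet> z = a$i*z$i + a$m*z$m + a$m'*z$m' + a$r*z$r" for z
    by (rule expand4) (use d ex in auto)
  have Qz: "Q$m = 0" "Q$m' = 0" "Q$r = 0" using Qo d by auto
  have xr: "x$r \<noteq> y$r"
  proof
    assume "x$r = y$r"
    then have "\<forall>c. x$c = y$c"
    proof -
      have "a \<bullet> x = a \<bullet> y" using hyp xy by auto
      then have "a$i*x$i = a$i*y$i" using e[of x] e[of y] xy \<open>x$r = y$r\<close> by simp
      then have "x$i = y$i" by (rule ai_cancel)
      show ?thesis
      proof
        fix c
        from ex consider "c=i" | "c=m" | "c=m'" | "c=r" by blast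
        then show "x$c = y$c" by cases (use \<open>x$i = y$i\<close> xy \<open>x$r = y$r\<close> in auto)
      qed
    qed
    then show False using nxy by (simp add: vec_eq_iff)
  qed
  define t where "t = x$r / (x$r - y$r)"
  have hx: "a$i*x$i + a$r*x$r = b" using hyp[of x] e[of x] xy by simp
  have hy: "a$i*y$i + a$r*y$r = b" using hyp[of y] e[of y] xy by simp
  have hQ: "a$i*Q$i = b" using hyp[OF QT] e[of Q] Qz by simp
  have r0: "(1-t)*x$r + t*y$r = 0"
  proof -
    have "x$r - y$r \<noteq> 0" using xr by simp
    then show ?thesis unfolding t_def by (simp add: field_simps)
  qed
  have "a$i*((1-t)*x$i + t*y$i) = (1-t)*(a$i*x$i) + t*(a$i*y$i)" by (simp add: algebra_simps)
  also have "\<dots> = (1-t)*(b - a$r*x$r) + t*(b - a$r*y$r)"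
  proof -
    have "a$i*x$i = b - a$r*x$r" "a$i*y$i = b - a$r*y$r" using hx hy by linarith+
    then show ?thesis by simp
  qed
  also have "\<dots> = b - a$r*((1-t)*x$r + t*y$r)" by (simp add: algebra_simps)
  also have "\<dots> = b" using r0 by simp
  finally have "a$i*((1-t)*x$i + t*y$i) = a$i*Q$i" using hQ by simp
  then have Qi': "Q$i = (1-t)*x$i + t*y$i" by (rule ai_cancel[symmetric])
  have "Q = (1-t) *\<^sub>R x + t *\<^sub>R y"
  proof (subst vec_eq_iff, rule allI)
    fix c
    from ex consider "c=i" | "c=m" | "c=m'" | "c=r" by blast
    then show "Q$c = ((1-t) *\<^sub>R x + t *\<^sub>R y)$c"
      by cases (use Qi' Qz xy r0 in auto)
  qed
  then have "Q \<in> affine hull {x,y}" unfolding affine_hull_2 by force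
  moreover have "affine hull {x,y} \<subseteq> affine hull R" using xy by (intro hull_mono) auto
  ultimately show False using QnotR by auto
qed

lemma F2: "\<lbrakk>x\<in>R; y\<in>R; m\<in>{j,k,l}; m'\<in>{j,k,l}; m\<noteq>m'; x$m=0; x$m'=0; y$m=0; y$m'=0\<rbrakk> \<Longrightarrow> x=y"
proof -
  assume as: "x\<in>R" "y\<in>R" "m\<in>{j,k,l}" "m'\<in>{j,k,l}" "m\<noteq>m'" "x$m=0" "x$m'=0" "y$m=0" "y$m'=0"
  obtain r where r: "r\<in>{j,k,l}" "r\<noteq>m" "r\<noteq>m'" using as dist by auto
  have ex: "\<forall>c::4. c=i \<or> c=m \<or> c=m' \<or> c=r" using exh as r dist by auto
  show "x = y" by (rule F2geo[OF _ _ _ _ _ _ ex]) (use as r dist in auto)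
qed


lemma SL:
  assumes uvw: "u\<in>R" "v\<in>R" "w\<in>R" "u\<noteq>v" "u\<noteq>w" "v\<noteq>w" and ind0: "\<not> affine_dependent {u,v,w}"
  shows "sep {j,k,l} u v w \<or> (Q$i = 1 \<and> u$i=0 \<and> v$i=0 \<and> w$i=0)"
proof -
  have "affine hull {u,v,w} \<subseteq> affine hull R" by (intro hull_mono) (use uvw in auto)
  then have Qn: "Q \<notin> affine hull {u,v,w}" using QnotR by auto
  have ind: "\<not> affine_dependent {Q,u,v,w}" using affine_independent_insert[OF ind0 Qn] by simp
  have dQ: "Q\<noteq>u" "Q\<noteq>v" "Q\<noteq>w" using uvw by auto
  have "is_simplex 3 {Q,u,v,w}" unfolding is_simplex_def using ind dQ uvw by auto
  moreover have "{Q,u,v,w} \<subseteq> T" using uvw QT by auto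
  ultimately have "B_simplex 3 {Q,u,v,w}" using simpl by auto
  then obtain c where c: "card {x\<in>{Q,u,v,w}. x$c=0} = 3" "\<forall>x\<in>{Q,u,v,w}. x$c\<noteq>0 \<longrightarrow> x$c=1"
    unfolding B_simplex_def by auto
  show ?thesis
  proof (cases "c = i")
    case True
    have "u$i=0 \<and> v$i=0 \<and> w$i=0"
      using card_filter4b[of Q u v w "\<lambda>x. x$c = 0"] dQ uvw Qi c(1) True by auto
    moreover have "Q$i = 1" using c(2) Qi True by auto
    ultimately show ?thesis by auto
  next
    case False
    then have Qc: "Q$c = 0" using Qo by auto
    have cK: "c\<in>{j,k,l}" using exh False by auto
    have "(u$c=0 \<and> v$c=0 \<and> \<not>w$c=0) \<or> (u$c=0 \<and> \<not>v$c=0 \<and> w$c=0) \<or> (\<not>u$c=0 \<and> v$c=0 \<and> w$c=0)"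
      using card_filter4a[of Q u v w "\<lambda>x. x$c = 0"] dQ uvw Qc c(1) by auto
    then have "(u$c=0 \<and> v$c=0 \<and> w$c=1) \<or> (u$c=0 \<and> v$c=1 \<and> w$c=0) \<or> (u$c=1 \<and> v$c=0 \<and> w$c=0)"
      using c(2) by auto
    then have "sep {j,k,l} u v w" unfolding sep_def using cK by blast
    then show ?thesis by simp
  qed
qed

lemma iall:
  assumes uvw: "u\<in>R" "v\<in>R" "w\<in>R" "u\<noteq>v" "u\<noteq>w" "v\<noteq>w" and ind0: "\<not> affine_dependent {u,v,w}"
    and z: "u$i=0" "v$i=0" "w$i=0" and x: "x\<in>R"
  shows "x$i = 0"
proof -
  have "card {u,v,w} = 3" using uvw by auto
  then have "aff_dim {u,v,w} = 2" using aff_dim_affine_independent[OF ind0] by simp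
  then have ad: "aff_dim (affine hull {u,v,w}) = aff_dim (affine hull R)" using affR by simp
  have sub: "affine hull {u,v,w} \<subseteq> affine hull R" by (intro hull_mono) (use uvw in auto)
  have eq: "affine hull {u,v,w} = affine hull R"
    by (rule affine_dim_equal[OF affine_affine_hull affine_affine_hull _ sub ad]) (auto simp: hull_inc)
  have "x \<in> affine hull R" using x by (simp add: hull_inc)
  then have "x \<in> affine hull {u,v,w}" using eq by simp
  then obtain p q r where "x = p *\<^sub>R u + q *\<^sub>R v + r *\<^sub>R w" unfolding affine_hull_3 by auto
  then show ?thesis using z by simp
qed

lemma noncol:
  fixes u v w :: "real^4"
  assumes "u\<noteq>v" "u$m = v$m" "w$m \<noteq> u$m"
  shows "\<not> affine_dependent {u,v,w}"
proof -
  have "\<not> collinear {u,w,v}"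
    unfolding collinear_3_expand
  proof
    assume "u = v \<or> (\<exists>t. w = t *\<^sub>R u + (1 - t) *\<^sub>R v)"
    then obtain t where "w = t *\<^sub>R u + (1 - t) *\<^sub>R v" using assms by auto
    then have "w$m = t * u$m + (1-t) * v$m" by simp
    also have "\<dots> = u$m" using assms by (simp add: algebra_simps)
    finally show False using assms by simp
  qed
  then have "\<not> affine_dependent {u,w,v}" using collinear_3_eq_affine_dependent by blast
  moreover have "{u,w,v} = {u,v,w}" by auto
  ultimately show ?thesis by simp
qed

lemma main: "B1_facet T \<or> B2_facet T \<or> flat_border T"
proof (cases "Q$i = 1 \<and> (\<forall>x\<in>R. x$i = 0)")
  case True
  have "B1_facet T" unfolding B1_facet_def
    using True QT by (intro exI[of _ i] bexI[of _ Q]) auto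
  then show ?thesis by simp
next
  case False
  have noi: "\<not> (Q$i = 1 \<and> u$i=0 \<and> v$i=0 \<and> w$i=0)"
    if "u\<in>R" "v\<in>R" "w\<in>R" "u\<noteq>v" "u\<noteq>w" "v\<noteq>w" "\<not> affine_dependent {u,v,w}" for u v w
    using iall[OF that] False by auto
  have Hs: "sep {j,k,l} u v w"
    if "u\<in>R" "v\<in>R" "w\<in>R" "u\<noteq>v" "u\<noteq>w" "v\<noteq>w" "m\<in>{j,k,l}" "u$m=v$m" "w$m\<noteq>u$m" for u v w m
  proof -
    have ind: "\<not> affine_dependent {u,v,w}" using noncol[of u v m w] that by auto
    show ?thesis using SL[OF that(1-6) ind] noi[OF that(1-6) ind] by auto
  qed
  obtain B where B: "B \<subseteq> R" "\<not> affine_dependent B" "affine hull R = affine hull B"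
    using affine_basis_exists[of R] by blast
  have "aff_dim B = 2" using affR B(3) by (metis aff_dim_affine_hull)
  then have "card B = 3" using aff_dim_affine_independent[OF B(2)] by simp
  then obtain u v w where uvw: "B = {u,v,w}" "u\<noteq>v" "v\<noteq>w" "u\<noteq>w" unfolding card_3_iff by auto
  have uvwR: "u\<in>R" "v\<in>R" "w\<in>R" using B(1) uvw by auto
  have indB: "\<not> affine_dependent {u,v,w}" using B(2) uvw by simp
  have sepN: "sep {j,k,l} u v w"
    using SL[OF uvwR uvw(2) uvw(4) uvw(3) indB] noi[OF uvwR uvw(2) uvw(4) uvw(3) indB] by auto
  interpret C: combi R Q j k l
  proof
    show "j\<noteq>k" "j\<noteq>l" "k\<noteq>l" using dist by auto
    show "Q \<notin> R" by simp
    show "Q$j = 0" "Q$k = 0" "Q$l = 0" using Qjkl by auto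
  next
    fix x y assume "x\<in>R" "y\<in>R" "x$j=y$j" "x$k=y$k" "x$l=y$l"
    then show "x = y" by (rule inj3)
  next
    fix x y m m' assume "x\<in>R" "y\<in>R" "m\<in>{j,k,l}" "m'\<in>{j,k,l}" "m\<noteq>m'" "x$m=0" "x$m'=0" "y$m=0" "y$m'=0"
    then show "x = y" by (rule F2)
  next
    fix x assume "x\<in>R" then show "x$j\<noteq>0 \<or> x$k\<noteq>0 \<or> x$l\<noteq>0" by (rule nz)
  next
    fix u v w m assume "u\<in>R" "v\<in>R" "w\<in>R" "u\<noteq>v" "u\<noteq>w" "v\<noteq>w" "m\<in>{j,k,l}" "u$m=v$m" "w$m\<noteq>u$m"
    then show "sep {j,k,l} u v w" by (rule Hs)
  qed
  have "concl (insert Q R)" using C.combi_main[OF uvwR uvw(2) uvw(4) uvw(3) sepN] .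
  then show ?thesis using TR unfolding concl_def by simp
qed

end


theorem lemma2p9:
  fixes \<tau> :: "(real ^ 4) set" and Q :: "real ^ 4"
  assumes "B_facet \<tau>"
    and "Q \<in> \<tau>"
    and "\<exists>i. Q $ i \<noteq> 0 \<and> (\<forall>j. j \<noteq> i \<longrightarrow> Q $ j = 0)"
    and "aff_dim (\<tau> - {Q}) = 2"
  shows "B1_facet \<tau> \<or> B2_facet \<tau> \<or> flat_border \<tau>"
proof -
  from assms(1) have fin: "finite \<tau>"
    and ab: "\<exists>a b. (\<forall>j. a $ j > 0) \<and> affine hull \<tau> = {x. a \<bullet> x = b}"
    and sim: "\<forall>S\<subseteq>\<tau>. is_simplex (CARD(4) - 1) S \<longrightarrow> B_simplex (CARD(4) - 1) S"
    unfolding B_facet_def by auto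
  obtain a b where a: "\<forall>j. a $ j > 0" "affine hull \<tau> = {x. a \<bullet> x = b}" using ab by blast
  have sim3: "\<forall>S\<subseteq>\<tau>. is_simplex 3 S \<longrightarrow> B_simplex 3 S" using sim by simp
  obtain i where i: "Q $ i \<noteq> 0" "\<forall>c. c \<noteq> i \<longrightarrow> Q $ c = 0" using assms(3) by blast
  obtain j k l where jkl: "j\<noteq>k" "j\<noteq>l" "k\<noteq>l" "i\<noteq>j" "i\<noteq>k" "i\<noteq>l" "\<forall>c::4. c=i \<or> c=j \<or> c=k \<or> c=l"
    using four_split[of i] by blast
  interpret G: geo \<tau> Q a b i j k l
    by (unfold_locales) (use fin assms(2) i a sim3 assms(4) jkl in auto)
  show ?thesis by (rule G.main)
qed

end
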